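(* Let $\mathcal{U}$ be a Banach space, $\mathcal{W},\mathcal{Y}$ reflexive Banach spaces, $\mathcal{G}$ a Hilbert space, $A\in L(\mathcal{Y},\mathcal{W}^* )$ continuously invertible, $B\in L(\mathcal{U},\mathcal{W}^* )$, $C\in L(\mathcal{Y},\mathcal{G})$, and $K:=CA^{-1}B\in L(\mathcal{U},\mathcal{G})$. Let $\{\mathcal{R}_\alpha\}_{\alpha>0}$ be a family of proper, convex, lower semicontinuous functionals $\mathcal{R}_\alpha:\mathcal{U}\to\mathbb{R}\cup\{+\infty\}$, and set $J_\alpha(u,y):=\frac12\|Cy-g^\delta\|_\mathcal{G}^2+\mathcal{R}_\alpha(u)$. Let $\mathcal{U}_h\subset\mathcal{U}$, $\mathcal{Y}_h\subset\mathcal{Y}$, $\mathcal{W}_h\subset\mathcal{W}$ be finite-dimensional subspaces. Let $g^\dagger\in\mathcal{G}$ and, for $\delta>0$, let $g^\delta\in\mathcal{G}$ satisfy $\|g^\dagger-g^\delta\|_\mathcal{G}\le\delta$. For $\alpha>0$, let $(u_\alpha^\delta,y_\alpha^\delta)$ be a minimizer of $J_\alpha(u,y)$ over $u\in\mathcal{U}$, $y\in\mathcal{Y}$ subject to $Ay=Bu$ in $\mathcal{W}^*$, and let $(u_{\alpha,h}^\delta,y_{\alpha,h}^\delta)$ be a minimizer of $J_\alpha(u,y)$ over $u\in\mathcal{U}_h$, $y\in\mathcal{Y}_h$ subject to $\langle Ay-Bu,w_h\rangle_{\mathcal{W}^*,\mathcal{W}}=0$ for all $w_h\in\mathcal{W}_h$.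 Let $c_1,c_2,\overline{\tau},\underline{\tau}>0$ be constants independent of $\delta$ with $\overline{\tau}>\underline{\tau}\ge\max\{\sqrt{1+2c_2},\,1+c_1\}$, and let $\alpha(\delta)>0$ be chosen such that $$\underline{\tau}\delta\le\|Cy_{\alpha(\delta),h}^\delta-g^\delta\|_\mathcal{G}\le\overline{\tau}\delta,$$ $$\Big|\|Cy_{\alpha(\delta),h}^\delta-g^\delta\|_\mathcal{G}-\|Cy_{\alpha(\delta)}^\delta-g^\delta\|_\mathcal{G}\Big|\le c_1\delta,$$ $$J_{\alpha(\delta)}(u_{\alpha(\delta),h}^\delta,y_{\alpha(\delta),h}^\delta)-J_{\alpha(\delta)}(u_{\alpha(\delta)}^\delta,y_{\alpha(\delta)}^\delta)\le c_2\delta^2.$$ Then for any solution $u^\dagger\in\mathcal{U}$ of $Ku=g^\dagger$, $$\mathcal{R}_{\alpha(\delta)}(u_{\alpha(\delta)}^\delta)\le\mathcal{R}_{\alpha(\delta)}(u^\dagger)\quad\text{and}\quad\mathcal{R}_{\alpha(\delta)}(u_{\alpha(\delta),h}^\delta)\le\mathcal{R}_{\alpha(\delta)}(u^\dagger)\quad\text{for all }\delta>0,$$ and moreover $$\|Cy_{\alpha(\delta),h}^\delta-g^\delta\|_\mathcal{G}\le\overline{\tau}\delta\to0\quad\text{and}\quad\|Cy_{\alpha(\delta)}^\delta-g^\delta\|_\mathcal{G}\le(\overline{\tau}+c_1)\delta\to0\quad(\delta\to0).$$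
   Context: Minimizers of the continuous and discrete problems are assumed to exist for all $\alpha,\delta$ considered. *)

theory Defs
  imports "HOL-Analysis.Analysis"
begin

definition reflexive_space :: "'a::real_normed_vector itself \<Rightarrow> bool" where
  "reflexive_space _ \<longleftrightarrow>
     (\<forall>\<phi> :: ('a \<Rightarrow>\<^sub>L real) \<Rightarrow>\<^sub>L real. \<exists>x::'a. \<forall>f. blinfun_apply \<phi> f = blinfun_apply f x)"

definition proper_fun :: "('a \<Rightarrow> ereal) \<Rightarrow> bool" where
  "proper_fun R \<longleftrightarrow> (\<forall>u. R u \<noteq> -\<infinity>) \<and> (\<exists>u. R u < \<infinity>)"

definition convex_fun :: "('a::real_vector \<Rightarrow> ereal) \<Rightarrow> bool" where
  "convex_fun R \<longleftrightarrow> (\<forall>x y t. 0 < t \<and> t < 1 \<longrightarrow>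
      R (t *\<^sub>R x + (1 - t) *\<^sub>R y) \<le> ereal t * R x + ereal (1 - t) * R y)"

definition lsc_fun :: "('a::topological_space \<Rightarrow> ereal) \<Rightarrow> bool" where
  "lsc_fun R \<longleftrightarrow> (\<forall>c. closed {u. R u \<le> c})"

definition fin_dim_subspace :: "'a::real_vector set \<Rightarrow> bool" where
  "fin_dim_subspace S \<longleftrightarrow> subspace S \<and> (\<exists>B. finite B \<and> span B = S)"

definition Jfun :: "('u \<Rightarrow> ereal) \<Rightarrow> ('y::real_normed_vector \<Rightarrow>\<^sub>L 'g::real_normed_vector)
     \<Rightarrow> 'g \<Rightarrow> 'u \<Rightarrow> 'y \<Rightarrow> ereal" where
  "Jfun R C g u y = ereal ((1/2) * (norm (C y - g))\<^sup>2) + R u"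

end

theory Submission
  imports Defs
begin

theorem proposition2p1:
  fixes A :: "'y::banach \<Rightarrow>\<^sub>L ('w::banach \<Rightarrow>\<^sub>L real)"
    and Ainv :: "('w \<Rightarrow>\<^sub>L real) \<Rightarrow>\<^sub>L 'y"
    and B :: "'u::banach \<Rightarrow>\<^sub>L ('w \<Rightarrow>\<^sub>L real)"
    and C :: "'y \<Rightarrow>\<^sub>L 'g::{real_inner, complete_space}"
    and R :: "real \<Rightarrow> 'u \<Rightarrow> ereal"
    and Uh :: "'u set" and Yh :: "'y set" and Wh :: "'w set"
    and gdag :: 'g and gd :: "real \<Rightarrow> 'g"
    and ud :: "real \<Rightarrow> real \<Rightarrow> 'u" and yd :: "real \<Rightarrow> real \<Rightarrow> 'y"
    and udh :: "real \<Rightarrow> real \<Rightarrow> 'u" and ydh :: "real \<Rightarrow> real \<Rightarrow> 'y"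
    and c1 c2 tau_up tau_lo :: real
    and alpha :: "real \<Rightarrow> real"
  assumes reflW: "reflexive_space TYPE('w)"
    and reflY: "reflexive_space TYPE('y)"
    and Ainv_left: "Ainv o\<^sub>L A = id_blinfun"
    and Ainv_right: "A o\<^sub>L Ainv = id_blinfun"
    and R_proper: "\<And>a. a > 0 \<Longrightarrow> proper_fun (R a)"
    and R_convex: "\<And>a. a > 0 \<Longrightarrow> convex_fun (R a)"
    and R_lsc: "\<And>a. a > 0 \<Longrightarrow> lsc_fun (R a)"
    and Uh_fd: "fin_dim_subspace Uh"
    and Yh_fd: "fin_dim_subspace Yh"
    and Wh_fd: "fin_dim_subspace Wh"
    and noise: "\<And>\<delta>. \<delta> > 0 \<Longrightarrow> norm (gdag - gd \<delta>) \<le> \<delta>"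
    and cont_feas: "\<And>\<delta> a. \<delta> > 0 \<Longrightarrow> a > 0 \<Longrightarrow> A (yd \<delta> a) = B (ud \<delta> a)"
    and cont_min: "\<And>\<delta> a u y. \<delta> > 0 \<Longrightarrow> a > 0 \<Longrightarrow> A y = B u \<Longrightarrow>
         Jfun (R a) C (gd \<delta>) (ud \<delta> a) (yd \<delta> a) \<le> Jfun (R a) C (gd \<delta>) u y"
    and disc_feas: "\<And>\<delta> a. \<delta> > 0 \<Longrightarrow> a > 0 \<Longrightarrow>
         udh \<delta> a \<in> Uh \<and> ydh \<delta> a \<in> Yh \<and>
         (\<forall>w\<in>Wh. (A (ydh \<delta> a) - B (udh \<delta> a)) w = 0)"
    and disc_min: "\<And>\<delta> a u y. \<delta> > 0 \<Longrightarrow> a > 0 \<Longrightarrow> u \<in> Uh \<Longrightarrow> y \<in> Yh \<Longrightarrow>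
         (\<forall>w\<in>Wh. (A y - B u) w = 0) \<Longrightarrow>
         Jfun (R a) C (gd \<delta>) (udh \<delta> a) (ydh \<delta> a) \<le> Jfun (R a) C (gd \<delta>) u y"
    and c1_pos: "c1 > 0" and c2_pos: "c2 > 0"
    and tau_lo_pos: "tau_lo > 0" and tau_up_pos: "tau_up > 0"
    and tau_order: "tau_up > tau_lo"
    and tau_lo_bound: "tau_lo \<ge> max (sqrt (1 + 2 * c2)) (1 + c1)"
    and alpha_pos: "\<And>\<delta>. \<delta> > 0 \<Longrightarrow> alpha \<delta> > 0"
    and discrep: "\<And>\<delta>. \<delta> > 0 \<Longrightarrow>
         tau_lo * \<delta> \<le> norm (C (ydh \<delta> (alpha \<delta>)) - gd \<delta>) \<and>
         norm (C (ydh \<delta> (alpha \<delta>)) - gd \<delta>) \<le> tau_up * \<delta>"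
    and resid_close: "\<And>\<delta>. \<delta> > 0 \<Longrightarrow>
         \<bar>norm (C (ydh \<delta> (alpha \<delta>)) - gd \<delta>) - norm (C (yd \<delta> (alpha \<delta>)) - gd \<delta>)\<bar> \<le> c1 * \<delta>"
    and J_close: "\<And>\<delta>. \<delta> > 0 \<Longrightarrow>
         Jfun (R (alpha \<delta>)) C (gd \<delta>) (udh \<delta> (alpha \<delta>)) (ydh \<delta> (alpha \<delta>))
         - Jfun (R (alpha \<delta>)) C (gd \<delta>) (ud \<delta> (alpha \<delta>)) (yd \<delta> (alpha \<delta>))
         \<le> ereal (c2 * \<delta>\<^sup>2)"
  shows "(\<forall>udag. (C o\<^sub>L Ainv o\<^sub>L B) udag = gdag \<longrightarrow>
            (\<forall>\<delta>>0. R (alpha \<delta>) (ud \<delta> (alpha \<delta>)) \<le> R (alpha \<delta>) udag \<and>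
                    R (alpha \<delta>) (udh \<delta> (alpha \<delta>)) \<le> R (alpha \<delta>) udag)) \<and>
         (\<forall>\<delta>>0. norm (C (ydh \<delta> (alpha \<delta>)) - gd \<delta>) \<le> tau_up * \<delta> \<and>
              norm (C (yd \<delta> (alpha \<delta>)) - gd \<delta>) \<le> (tau_up + c1) * \<delta>) \<and>
         ((\<lambda>\<delta>. norm (C (ydh \<delta> (alpha \<delta>)) - gd \<delta>)) \<longlongrightarrow> 0) (at_right 0) \<and>
         ((\<lambda>\<delta>. norm (C (yd \<delta> (alpha \<delta>)) - gd \<delta>)) \<longlongrightarrow> 0) (at_right 0)"
proof -
  have main: "R (alpha \<delta>) (ud \<delta> (alpha \<delta>)) \<le> R (alpha \<delta>) udag \<and>
              R (alpha \<delta>) (udh \<delta> (alpha \<delta>)) \<le> R (alpha \<delta>) udag"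
    if K: "(C o\<^sub>L Ainv o\<^sub>L B) udag = gdag" and d: "\<delta> > 0" for udag \<delta>
  proof -
    define a where "a = alpha \<delta>"
    have a: "a > 0" using alpha_pos d a_def by auto
    define yy where "yy = Ainv (B udag)"
    have Ayy: "A yy = B udag"
      using arg_cong[OF Ainv_right, of "\<lambda>f. blinfun_apply f (B udag)"] unfolding yy_def by simp
    have Cyy: "C yy = gdag" using K unfolding yy_def by simp
    have nz: "norm (gdag - gd \<delta>) \<le> \<delta>" using noise d by auto
    have nz2: "(norm (gdag - gd \<delta>))\<^sup>2 \<le> \<delta>\<^sup>2"
      using nz by (simp add: power_mono)
    have Jc: "Jfun (R a) C (gd \<delta>) (ud \<delta> a) (yd \<delta> a) \<le> ereal ((1/2) * (norm (gdag - gd \<delta>))\<^sup>2) + R a udag"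
      using cont_min[OF d a Ayy] Cyy by (simp add: Jfun_def)
    define rh where "rh = norm (C (ydh \<delta> a) - gd \<delta>)"
    define rc where "rc = norm (C (yd \<delta> a) - gd \<delta>)"
    have dh: "tau_lo * \<delta> \<le> rh" using discrep[OF d] rh_def a_def by auto
    have rcl: "\<bar>rh - rc\<bar> \<le> c1 * \<delta>" using resid_close[OF d] rh_def rc_def a_def by auto
    have t1: "tau_lo \<ge> 1 + c1" and t2: "tau_lo \<ge> sqrt (1 + 2*c2)" using tau_lo_bound by auto
    have rcge: "rc \<ge> \<delta>"
    proof -
      have "tau_lo * \<delta> \<ge> (1 + c1) * \<delta>" using t1 d by (simp add: mult_right_mono)
      thus ?thesis using dh rcl by (simp add: algebra_simps abs_if split: if_splits)
    qed
    have rc2: "rc\<^sup>2 \<ge> \<delta>\<^sup>2" using rcge d by (simp add: power_mono)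
    have "tau_lo\<^sup>2 \<ge> 1 + 2*c2"
      using t2 c2_pos by (metis less_eq_real_def power2_le_imp_le real_le_rsqrt real_sqrt_ge_zero sqrt_le_D)
    have rh2: "rh\<^sup>2 \<ge> (1 + 2*c2) * \<delta>\<^sup>2"
    proof -
      have "(tau_lo*\<delta>)\<^sup>2 \<le> rh\<^sup>2" using dh tau_lo_pos d by (simp add: power_mono)
      moreover have "(1 + 2*c2) * \<delta>\<^sup>2 \<le> tau_lo\<^sup>2 * \<delta>\<^sup>2"
        using \<open>tau_lo\<^sup>2 \<ge> 1 + 2*c2\<close> by (simp add: mult_right_mono)
      ultimately show ?thesis by (simp add: power_mult_distrib)
    qed
    show ?thesis
    proof (cases "R a udag")
      case PInf then show ?thesis using a_def by simp
    next
      case MInf then show ?thesis using R_proper[OF a] by (simp add: proper_fun_def)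
    next
      case (real ru)
      have "R a (ud \<delta> a) \<noteq> -\<infinity>" using R_proper[OF a] by (simp add: proper_fun_def)
      moreover have "R a (ud \<delta> a) \<noteq> \<infinity>" using Jc real by (auto simp: Jfun_def)
      ultimately obtain p where p: "R a (ud \<delta> a) = ereal p" by (cases "R a (ud \<delta> a)") auto
      have pc: "(1/2)*rc\<^sup>2 + p \<le> (1/2)*(norm (gdag - gd \<delta>))\<^sup>2 + ru"
        using Jc p real rc_def by (simp add: Jfun_def)
      have Jh: "Jfun (R a) C (gd \<delta>) (udh \<delta> a) (ydh \<delta> a) - ereal ((1/2)*rc\<^sup>2 + p) \<le> ereal (c2 * \<delta>\<^sup>2)"
        using J_close[OF d] p rc_def a_def by (simp add: Jfun_def)
      have "R a (udh \<delta> a) \<noteq> -\<infinity>" using R_proper[OF a] by (simp add: proper_fun_def)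
      moreover have "R a (udh \<delta> a) \<noteq> \<infinity>" using Jh by (auto simp: Jfun_def)
      ultimately obtain q where q: "R a (udh \<delta> a) = ereal q" by (cases "R a (udh \<delta> a)") auto
      have qh: "(1/2)*rh\<^sup>2 + q - ((1/2)*rc\<^sup>2 + p) \<le> c2 * \<delta>\<^sup>2"
        using Jh q rh_def by (simp add: Jfun_def)
      have "p \<le> ru" using pc rc2 nz2 by linarith
      moreover have "q \<le> ru" using qh pc rh2 nz2 by (simp add: algebra_simps)
      ultimately show ?thesis using p q real a_def by simp
    qed
  qed
  have bnd: "norm (C (ydh \<delta> (alpha \<delta>)) - gd \<delta>) \<le> tau_up * \<delta> \<and>
              norm (C (yd \<delta> (alpha \<delta>)) - gd \<delta>) \<le> (tau_up + c1) * \<delta>" if d: "\<delta> > 0" for \<delta>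
    using discrep[OF d] resid_close[OF d] by (simp add: algebra_simps abs_if split: if_splits)
  have lim0: "((\<lambda>\<delta>. c * \<delta>) \<longlongrightarrow> 0) (at_right 0)" for c :: real
    by (auto intro!: tendsto_eq_intros tendsto_mult_right_zero simp: tendsto_ident_at)
  have L1: "((\<lambda>\<delta>. norm (C (ydh \<delta> (alpha \<delta>)) - gd \<delta>)) \<longlongrightarrow> 0) (at_right 0)"
    apply (rule tendsto_sandwich[OF _ _ tendsto_const lim0[of tau_up]])
    using bnd by (auto simp: eventually_at_right_less eventually_at_right_field intro: exI[of _ 1])
  have L2: "((\<lambda>\<delta>. norm (C (yd \<delta> (alpha \<delta>)) - gd \<delta>)) \<longlongrightarrow> 0) (at_right 0)"
    apply (rule tendsto_sandwich[OF _ _ tendsto_const lim0[of "tau_up + c1"]])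
    using bnd by (auto simp: eventually_at_right_less eventually_at_right_field intro: exI[of _ 1])
  show ?thesis using main bnd L1 L2 by blast
qed

end
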